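(* Let $L$ be a linear order in which every cut $(I,J)$ with $I$ and $J$ both nonempty has a type. If $(C_k)_{k\in\omega}$ and $(D_l)_{l\in\omega}$ are two ladders in $L$, then there exist $k_0,l_0\in\omega$ such that $C_{k_0+n}=D_{l_0+n}$ for all $n\in\omega$. Consequently, if $(C_k)$ has spectrum $(n_k)_{k\in\omega}$ and $(D_l)$ has spectrum $(m_l)_{l\in\omega}$, then these spectra are tail-equivalent: there exist $k_0,l_0$ with $n_{k_0+n}=m_{l_0+n}$ for all $n\in\omega$.
   Context: A cut in a linear order $L$ is a pair $(I,J)$ where $I$ is an initial segment of $L$ and $J=L\setminus I$. For cuts $C_1=(I_1,J_1)$ and $C_2=(I_2,J_2)$, write $C_1<C_2$ if $I_1$ is a strict initial segment of $I_2$. For $n\in\omega$, a cut $C=(I,J)$ has type $n$, written $tp(C)=n$, if $I$ has a final segment isomorphic to the ordinal $\omega^n$ (so type $0$ means $I$ has a greatest element); a cut has at most one type. A sequence of cuts $\cdots<C_2<C_1<C_0$ in $L$, each with both sides nonempty, is a ladder if: (1) it is coinitial in $L$, i.e. for every $x\in L$ there is $k$ with $x$ not in the left side of $C_k$ (every point of $L$ is eventually to the right of the cuts); (2) $tp(C_{k+1})\ge tp(C_k)$ for all $k$; (3) for all $k$, every cut $D$ with $C_{k+1}<D<C_k$ satisfies $tp(D)<tp(C_k)$. A ladder $(C_k)$ has spectrum $(n_k)_{k\in\omega}$ if $tp(C_k)=n_k$ for all $k$. *)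

theory Defs
  imports Main
begin

text \<open>The linear order L is modelled as a type of class linorder (L = UNIV).
A cut (I, J) is represented by its left side I; J is its complement -I.\<close>

definition is_cut :: "'a::linorder set \<Rightarrow> bool" where
  "is_cut I \<longleftrightarrow> (\<forall>x y. y \<in> I \<longrightarrow> x \<le> y \<longrightarrow> x \<in> I)"

definition proper_cut :: "'a::linorder set \<Rightarrow> bool" where
  "proper_cut I \<longleftrightarrow> is_cut I \<and> I \<noteq> {} \<and> - I \<noteq> {}"

text \<open>The ordinal omega^n, realised as length-n lists of naturals with the
lexicographic order (first coordinate most significant).\<close>

fun lex_less :: "nat list \<Rightarrow> nat list \<Rightarrow> bool" where
  "lex_less [] [] = False"
| "lex_less (x # xs) (y # ys) = (x < y \<or> (x = y \<and> lex_less xs ys))"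
| "lex_less _ _ = False"

definition omega_pow :: "nat \<Rightarrow> nat list set" where
  "omega_pow n = {xs. length xs = n}"

definition final_segment :: "'a::linorder set \<Rightarrow> 'a set \<Rightarrow> bool" where
  "final_segment F I \<longleftrightarrow> F \<subseteq> I \<and> (\<forall>x y. x \<in> F \<longrightarrow> y \<in> I \<longrightarrow> x \<le> y \<longrightarrow> y \<in> F)"

definition iso_omega_pow :: "'a::linorder set \<Rightarrow> nat \<Rightarrow> bool" where
  "iso_omega_pow F n \<longleftrightarrow> (\<exists>f. bij_betw f F (omega_pow n) \<and>
      (\<forall>x\<in>F. \<forall>y\<in>F. x < y \<longleftrightarrow> lex_less (f x) (f y)))"

definition cut_type :: "'a::linorder set \<Rightarrow> nat \<Rightarrow> bool" where
  "cut_type I n \<longleftrightarrow> is_cut I \<and> (\<exists>F. final_segment F I \<and> iso_omega_pow F n)"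

definition ladder :: "(nat \<Rightarrow> 'a::linorder set) \<Rightarrow> bool" where
  "ladder C \<longleftrightarrow>
     (\<forall>k. proper_cut (C k)) \<and>
     (\<forall>k. C (Suc k) \<subset> C k) \<and>
     (\<forall>x. \<exists>k. x \<notin> C k) \<and>
     (\<exists>ns. (\<forall>k. cut_type (C k) (ns k)) \<and>
        (\<forall>k. ns (Suc k) \<ge> ns k) \<and>
        (\<forall>k D. is_cut D \<longrightarrow> C (Suc k) \<subset> D \<longrightarrow> D \<subset> C k \<longrightarrow>
              (\<exists>m. cut_type D m \<and> m < ns k)))"

definition has_spectrum :: "(nat \<Rightarrow> 'a::linorder set) \<Rightarrow> (nat \<Rightarrow> nat) \<Rightarrow> bool" where
  "has_spectrum C ns \<longleftrightarrow> ladder C \<and> (\<forall>k. cut_type (C k) (ns k))"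

end

theory Submission
  imports Defs
begin

lemma lex_less_len: "length xs = length ys \<Longrightarrow> lex_less xs ys \<Longrightarrow> (xs, ys) \<in> lex less_than"
  by (induction xs ys rule: lex_less.induct) auto

lemma lex_rep: "lex_less (replicate k 0 @ xs) (replicate k 0 @ ys) = lex_less xs ys"
  by (induction k) auto

lemma no_shrink:
  assumes m: "m \<ge> 1"
    and into: "\<And>x. x \<in> omega_pow m \<Longrightarrow> g x \<in> omega_pow m \<and> hd (g x) = 0"
    and mono: "\<And>x y. x \<in> omega_pow m \<Longrightarrow> y \<in> omega_pow m \<Longrightarrow> lex_less x y \<Longrightarrow> lex_less (g x) (g y)"
  shows False
proof -
  let ?S = "{p \<in> omega_pow m. lex_less (g p) p}"
  define p0 where "p0 = (1::nat) # replicate (m-1) 0"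
  have p0: "p0 \<in> omega_pow m" using m by (simp add: p0_def omega_pow_def)
  obtain h t where gp: "g p0 = h # t" using into[OF p0] m
    by (cases "g p0") (auto simp: omega_pow_def)
  have "h = 0" using into[OF p0] gp by simp
  hence "lex_less (g p0) p0" using gp by (simp add: p0_def)
  hence p0S: "p0 \<in> ?S" using p0 by simp
  obtain p where p: "p \<in> ?S" and minp: "\<And>q. (q,p) \<in> lex less_than \<Longrightarrow> q \<notin> ?S"
    by (rule wfE_min[OF wf_lex[OF wf_less_than] p0S]) blast
  have pA: "p \<in> omega_pow m" and pl: "lex_less (g p) p" using p by simp_all
  have gA: "g p \<in> omega_pow m" using into[OF pA] by simp
  have "lex_less (g (g p)) (g p)" by (rule mono[OF gA pA pl])
  hence "g p \<in> ?S" using gA by simp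
  moreover have "(g p, p) \<in> lex less_than"
    by (rule lex_less_len) (use gA pA pl in \<open>simp_all add: omega_pow_def\<close>)
  ultimately show False using minp by blast
qed

lemma seg_eq:
  fixes F1 F2 :: "'a::linorder set"
  assumes sub: "F2 \<subseteq> F1" and ne: "z \<in> F2"
    and up: "\<And>x y. x \<in> F2 \<Longrightarrow> y \<in> F1 \<Longrightarrow> x \<le> y \<Longrightarrow> y \<in> F2"
    and i1: "iso_omega_pow F1 a" and i2: "iso_omega_pow F2 b"
  shows "a = b"
proof -
  obtain f1 where b1: "bij_betw f1 F1 (omega_pow a)"
    and o1: "\<forall>x\<in>F1. \<forall>y\<in>F1. x<y \<longleftrightarrow> lex_less (f1 x) (f1 y)"
    using i1 unfolding iso_omega_pow_def by blast
  obtain f2 where b2: "bij_betw f2 F2 (omega_pow b)"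
    and o2: "\<forall>x\<in>F2. \<forall>y\<in>F2. x<y \<longleftrightarrow> lex_less (f2 x) (f2 y)"
    using i2 unfolding iso_omega_pow_def by blast
  have im1: "f1 ` F1 = omega_pow a" using b1 by (simp add: bij_betw_def)
  have im2: "f2 ` F2 = omega_pow b" using b2 by (simp add: bij_betw_def)
  have "\<not> b < a"
  proof
    assume ba: "b < a"
    define sh where "sh y = (hd (f1 z) + 1 + hd y) # tl y" for y :: "nat list"
    define h where "h = inv_into F1 f1"
    define g where "g y = replicate (a-b) 0 @ f2 (h (sh y))" for y
    have zA: "f1 z \<in> omega_pow a" using sub ne im1 by blast
    have shA: "sh y \<in> omega_pow a \<and> lex_less (f1 z) (sh y)" if yA: "y \<in> omega_pow a" for y
    proof -
      obtain c cs where c: "f1 z = c # cs" using zA ba by (cases "f1 z") (auto simp: omega_pow_def)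
      obtain d ds where d: "y = d # ds" using yA ba by (cases y) (auto simp: omega_pow_def)
      show ?thesis using yA d c by (simp add: sh_def omega_pow_def)
    qed
    have hF2: "h (sh y) \<in> F2 \<and> f1 (h (sh y)) = sh y" if "y \<in> omega_pow a" for y
    proof -
      have s: "sh y \<in> f1 ` F1" using shA[OF that] im1 by simp
      have hin: "h (sh y) \<in> F1" unfolding h_def using s by (rule inv_into_into)
      have fh: "f1 (h (sh y)) = sh y" unfolding h_def using s by (rule f_inv_into_f)
      have "z < h (sh y)" using o1 hin sub ne fh shA[OF that] by auto
      thus ?thesis using up[OF ne hin] fh by simp
    qed
    have shmono: "lex_less (sh y) (sh y')" if yy: "y \<in> omega_pow a" "y' \<in> omega_pow a" "lex_less y y'" for y y'
    proof -
      obtain d ds where d: "y = d # ds" using yy ba by (cases y) (auto simp: omega_pow_def)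
      obtain d' ds' where d': "y' = d' # ds'" using yy ba by (cases y') (auto simp: omega_pow_def)
      show ?thesis using yy d d' by (auto simp: sh_def)
    qed
    show False
    proof (rule no_shrink[of a g])
      show "1 \<le> a" using ba by simp
    next
      fix x assume x: "x \<in> omega_pow a"
      have "f2 (h (sh x)) \<in> omega_pow b" using hF2[OF x] im2 by blast
      then show "g x \<in> omega_pow a \<and> hd (g x) = 0" using ba
        by (simp add: g_def omega_pow_def)
    next
      fix x y assume x: "x \<in> omega_pow a" and y: "y \<in> omega_pow a" and xy: "lex_less x y"
      have "lex_less (sh x) (sh y)" using shmono x y xy by blast
      moreover have "h (sh x) \<in> F1" "h (sh y) \<in> F1" using hF2[OF x] hF2[OF y] sub by auto
      ultimately have "h (sh x) < h (sh y)" using o1 hF2[OF x] hF2[OF y] by metis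
      hence "lex_less (f2 (h (sh x))) (f2 (h (sh y)))" using o2 hF2[OF x] hF2[OF y] by auto
      thus "lex_less (g x) (g y)" by (simp add: g_def lex_rep)
    qed
  qed
  moreover have "\<not> a < b"
  proof
    assume ab: "a < b"
    define h where "h = inv_into F2 f2"
    define g where "g y = replicate (b-a) 0 @ f1 (h y)" for y
    have hF2: "h y \<in> F2 \<and> f2 (h y) = y" if "y \<in> omega_pow b" for y
    proof -
      have s: "y \<in> f2 ` F2" using that im2 by simp
      show ?thesis unfolding h_def using s by (simp add: inv_into_into f_inv_into_f)
    qed
    show False
    proof (rule no_shrink[of b g])
      show "1 \<le> b" using ab by simp
    next
      fix x assume x: "x \<in> omega_pow b"
      have "f1 (h x) \<in> omega_pow a" using hF2[OF x] im1 sub by blast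
      then show "g x \<in> omega_pow b \<and> hd (g x) = 0" using ab
        by (simp add: g_def omega_pow_def)
    next
      fix x y assume x: "x \<in> omega_pow b" and y: "y \<in> omega_pow b" and xy: "lex_less x y"
      have "h x < h y" using o2 hF2[OF x] hF2[OF y] xy by auto
      hence "lex_less (f1 (h x)) (f1 (h y))" using o1 hF2[OF x] hF2[OF y] sub by auto
      thus "lex_less (g x) (g y)" by (simp add: g_def lex_rep)
    qed
  qed
  ultimately show ?thesis by simp
qed

lemma iso_ne: "iso_omega_pow F n \<Longrightarrow> F \<noteq> {}"
proof
  assume a: "iso_omega_pow F n" "F = {}"
  obtain f where "bij_betw f F (omega_pow n)" using a(1) unfolding iso_omega_pow_def by blast
  hence "omega_pow n = {}" using a(2) by (simp add: bij_betw_def)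
  moreover have "replicate n 0 \<in> omega_pow n" by (simp add: omega_pow_def)
  ultimately show False by simp
qed

lemma type_unique: "cut_type I n \<Longrightarrow> cut_type I m \<Longrightarrow> n = m"
proof -
  assume "cut_type I n" "cut_type I m"
  then obtain F1 F2 where f1: "final_segment F1 I" "iso_omega_pow F1 n"
    and f2: "final_segment F2 I" "iso_omega_pow F2 m" unfolding cut_type_def by blast
  have nest: "F1 \<subseteq> F2 \<or> F2 \<subseteq> F1"
  proof (rule ccontr)
    assume "\<not> ?thesis"
    then obtain x y where x: "x \<in> F1" "x \<notin> F2" and y: "y \<in> F2" "y \<notin> F1" by blast
    show False
    proof (cases "x \<le> y")
      case True thus False using x y f1(1) f2(1) unfolding final_segment_def by blast
    next
      case False hence "y \<le> x" by simp
      thus False using x y f1(1) f2(1) unfolding final_segment_def by blast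
    qed
  qed
  obtain z1 where z1: "z1 \<in> F1" using iso_ne[OF f1(2)] by blast
  obtain z2 where z2: "z2 \<in> F2" using iso_ne[OF f2(2)] by blast
  show "n = m"
  proof (cases "F2 \<subseteq> F1")
    case True
    show ?thesis
      by (rule seg_eq[OF True z2 _ f1(2) f2(2)]) (use f1(1) f2(1) True in \<open>auto simp: final_segment_def\<close>)
  next
    case False
    hence s: "F1 \<subseteq> F2" using nest by blast
    have "m = n"
      by (rule seg_eq[OF s z1 _ f2(2) f1(2)]) (use f1(1) f2(1) s in \<open>auto simp: final_segment_def\<close>)
    thus ?thesis by simp
  qed
qed

definition lad :: "(nat \<Rightarrow> 'a::linorder set) \<Rightarrow> (nat \<Rightarrow> nat) \<Rightarrow> bool" where
  "lad C ns \<longleftrightarrow> (\<forall>k. proper_cut (C k)) \<and> (\<forall>k. C (Suc k) \<subset> C k) \<and> (\<forall>x. \<exists>k. x \<notin> C k) \<and>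
     (\<forall>k. cut_type (C k) (ns k)) \<and> (\<forall>k. ns (Suc k) \<ge> ns k) \<and>
     (\<forall>k X. is_cut X \<longrightarrow> C (Suc k) \<subset> X \<longrightarrow> X \<subset> C k \<longrightarrow> (\<exists>m. cut_type X m \<and> m < ns k))"

lemma ladder_lad: "ladder C \<Longrightarrow> \<exists>ns. lad C ns"
  unfolding ladder_def lad_def by (elim conjE exE) (intro exI conjI; assumption)

lemma cut_lin: assumes A: "is_cut A" and B: "is_cut B" shows "A \<subseteq> B \<or> B \<subseteq> A"
proof (rule ccontr)
  assume "\<not> ?thesis"
  then obtain x y where x: "x \<in> A" "x \<notin> B" and y: "y \<in> B" "y \<notin> A" by blast
  show False
  proof (cases "x \<le> y")
    case True thus False using x y B unfolding is_cut_def by blast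
  next
    case False hence "y \<le> x" by simp
    thus False using x y A unfolding is_cut_def by blast
  qed
qed

lemma lad_proper: assumes "lad C ns" shows "proper_cut (C k)"
proof -
  have "\<forall>k. proper_cut (C k)" using assms[unfolded lad_def] by (elim conjE)
  thus ?thesis by (rule spec)
qed

lemma lad_cut: assumes "lad C ns" shows "is_cut (C k)"
  using lad_proper[OF assms, of k] unfolding proper_cut_def by (elim conjE)

lemma lad_ne: assumes "lad C ns" shows "C k \<noteq> {}"
  using lad_proper[OF assms, of k] unfolding proper_cut_def by (elim conjE)

lemma lad_step: assumes "lad C ns" shows "C (Suc k) \<subset> C k"
proof -
  have "\<forall>k. C (Suc k) \<subset> C k" using assms[unfolded lad_def] by (elim conjE)
  thus ?thesis by (rule spec)
qed

lemma lad_type: assumes "lad C ns" shows "cut_type (C k) (ns k)"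
proof -
  have "\<forall>k. cut_type (C k) (ns k)" using assms[unfolded lad_def] by (elim conjE)
  thus ?thesis by (rule spec)
qed

lemma lad_mono: assumes "lad C ns" shows "ns k \<le> ns (Suc k)"
proof -
  have "\<forall>k. ns (Suc k) \<ge> ns k" using assms[unfolded lad_def] by (elim conjE)
  thus ?thesis by (rule spec)
qed

lemma lad_escape: assumes "lad C ns" shows "\<exists>k. x \<notin> C k"
proof -
  have "\<forall>x. \<exists>k. x \<notin> C k" using assms[unfolded lad_def] by (elim conjE)
  thus ?thesis by (rule spec)
qed

lemma lad_gap: assumes "lad C ns" "is_cut X" "C (Suc k) \<subset> X" "X \<subset> C k" "cut_type X t" shows "t < ns k"
proof -
  have "\<forall>k X. is_cut X \<longrightarrow> C (Suc k) \<subset> X \<longrightarrow> X \<subset> C k \<longrightarrow> (\<exists>m. cut_type X m \<and> m < ns k)"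
    using assms(1)[unfolded lad_def] by (elim conjE)
  then obtain m where "cut_type X m" "m < ns k" using assms(2-4) by blast
  thus ?thesis using type_unique[OF assms(5)] by simp
qed

lemma lad_anti: assumes "lad C ns" "a \<le> b" shows "C b \<subseteq> C a"
  using assms(2)
proof (induction b rule: dec_induct)
  case base then show ?case by simp
next
  case (step n)
  have "C (Suc n) \<subset> C n" using lad_step[OF assms(1)] .
  then show ?case using step by blast
qed

lemma lad_iff: assumes "lad C ns" shows "C a \<subseteq> C b \<longleftrightarrow> b \<le> a"
proof
  assume "C a \<subseteq> C b"
  show "b \<le> a"
  proof (rule ccontr)
    assume "\<not> b \<le> a"
    hence "Suc a \<le> b" by simp
    hence "C b \<subseteq> C (Suc a)" by (rule lad_anti[OF assms])
    moreover have "C (Suc a) \<subset> C a" using lad_step[OF assms] .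
    ultimately show False using \<open>C a \<subseteq> C b\<close> by blast
  qed
qed (rule lad_anti[OF assms])

lemma lad_below: assumes "lad C ns" "is_cut X" "x \<in> X" shows "\<exists>k. C k \<subset> X"
proof -
  obtain k where "x \<notin> C k" using lad_escape[OF assms(1)] by blast
  thus ?thesis using cut_lin[OF lad_cut[OF assms(1)] assms(2), of k] assms(3) by blast
qed

lemma lad_locate: assumes C: "lad C ns" and X: "is_cut X" "X \<noteq> {}" "X \<subseteq> C 0"
  shows "\<exists>j. C (Suc j) \<subset> X \<and> X \<subseteq> C j"
proof -
  obtain x where "x \<in> X" using X by blast
  hence "\<exists>k. C k \<subset> X" using lad_below[OF C X(1)] by blast
  hence "\<exists>k. C k \<subset> X \<and> (\<forall>m<k. \<not> C m \<subset> X)" by (rule exists_least_iff[THEN iffD1])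
  then obtain k where k: "C k \<subset> X" and mn: "\<forall>m<k. \<not> C m \<subset> X" by blast
  have "k \<noteq> 0"
  proof
    assume "k = 0" thus False using k X(3) by auto
  qed
  then obtain j where j: "k = Suc j" by (cases k) auto
  have "\<not> C j \<subset> X" using mn j by simp
  hence "X \<subseteq> C j" using cut_lin[OF lad_cut[OF C] X(1), of j] by blast
  thus ?thesis using k j by blast
qed

lemma step_between:
  assumes C: "lad C ns" and D: "lad D ms"
    and b1: "C (Suc j) \<subset> D (Suc l)" and b2: "D (Suc l) \<subset> C j"
  shows "C (Suc j) \<subset> D l \<and> D l \<subset> C j"
proof -
  have t1: "ms (Suc l) < ns j"
    using lad_gap[OF C lad_cut[OF D] b1 b2 lad_type[OF D]] .
  have mo: "ms l \<le> ms (Suc l)" using lad_mono[OF D] .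
  have dd: "D (Suc l) \<subset> D l" using lad_step[OF D] .
  have "D l \<subset> C j"
  proof (rule ccontr)
    assume "\<not> D l \<subset> C j"
    hence cj: "C j \<subseteq> D l" using cut_lin[OF lad_cut[OF D] lad_cut[OF C], of l j] by blast
    show False
    proof (cases "C j = D l")
      case True
      hence "ms l = ns j" using type_unique lad_type[OF C, of j] lad_type[OF D, of l] by metis
      thus False using t1 mo by simp
    next
      case False
      hence "C j \<subset> D l" using cj by blast
      hence "ns j < ms l" using lad_gap[OF D lad_cut[OF C] _ _ lad_type[OF C]] b2 by blast
      thus False using t1 mo by simp
    qed
  qed
  thus ?thesis using b1 dd by blast
qed

lemma all_between:
  assumes C: "lad C ns" and D: "lad D ms"
  shows "C (Suc j) \<subset> D l \<and> D l \<subset> C j \<Longrightarrow> C (Suc j) \<subset> D 0 \<and> D 0 \<subset> C j"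
proof (induction l)
  case 0 then show ?case by simp
next
  case (Suc l)
  have "C (Suc j) \<subset> D (Suc l)" "D (Suc l) \<subset> C j" using Suc.prems by simp_all
  hence "C (Suc j) \<subset> D l \<and> D l \<subset> C j" by (rule step_between[OF C D])
  thus ?case by (rule Suc.IH)
qed

lemma ev_range:
  assumes C: "lad C ns" and D: "lad D ms"
  shows "\<exists>L. \<forall>l\<ge>L. \<exists>k. D l = C k"
proof -
  obtain y where "y \<in> D 0" using lad_ne[OF D] by blast
  then obtain J where J: "C J \<subset> D 0" using lad_below[OF C lad_cut[OF D]] by blast
  obtain x where x: "x \<in> C J" using lad_ne[OF C] by blast
  then obtain L where L: "x \<notin> D L" using lad_escape[OF D] by blast
  have DL: "D L \<subseteq> C J" using cut_lin[OF lad_cut[OF D] lad_cut[OF C], of L J] x L by blast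
  have "\<exists>k. D l = C k" if l: "l \<ge> L" for l
  proof -
    have Dl: "D l \<subseteq> C J" using lad_anti[OF D l] DL by blast
    have "D l \<subseteq> C 0" using Dl lad_anti[OF C, of 0 J] by simp
    then obtain j where j: "C (Suc j) \<subset> D l" "D l \<subseteq> C j"
      using lad_locate[OF C lad_cut[OF D] lad_ne[OF D]] by blast
    show ?thesis
    proof (cases "D l = C j")
      case True thus ?thesis by (rule exI)
    next
      case False
      hence "D l \<subset> C j" using j(2) by (simp add: psubset_eq)
      hence b0: "D 0 \<subset> C j" using all_between[OF C D, of j l] j(1) by simp
      have "C (Suc j) \<subset> C J" using j(1) Dl by (rule psubset_subset_trans)
      hence "\<not> C J \<subseteq> C (Suc j)" using subset_antisym by (auto simp: psubset_eq)
      hence "J \<le> j" using lad_iff[OF C, of J "Suc j"] by simp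
      hence "C j \<subseteq> C J" using lad_anti[OF C] by blast
      hence "C j \<subset> D 0" using J by (rule subset_psubset_trans)
      thus ?thesis using b0 by (meson less_asym)
    qed
  qed
  thus ?thesis by blast
qed

lemma tails:
  assumes C: "lad C ns" and D: "lad D ms"
  shows "\<exists>k0 l0. \<forall>n. C (k0 + n) = D (l0 + n)"
proof -
  obtain L0 where L0': "\<forall>l\<ge>L0. \<exists>k. D l = C k" using ev_range[OF C D] by (elim exE)
  have L0: "\<exists>k. D l = C k" if "l \<ge> L0" for l using L0' that by simp
  obtain K0 where K0': "\<forall>k\<ge>K0. \<exists>l. C k = D l" using ev_range[OF D C] by (elim exE)
  have K0: "\<exists>l. C k = D l" if "k \<ge> K0" for k using K0' that by simp
  obtain b where b: "C K0 = D b" using K0[of K0] by auto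
  define l0 where "l0 = max L0 b"
  obtain k0 where k0: "D l0 = C k0" using L0[of l0] by (auto simp: l0_def)
  have "D l0 \<subseteq> D b" using lad_anti[OF D] by (simp add: l0_def)
  hence "C k0 \<subseteq> C K0" using k0 b by simp
  hence "K0 \<le> k0" using lad_iff[OF C] by blast
  have "C (k0 + n) = D (l0 + n)" for n
  proof (induction n)
    case 0 then show ?case using k0 by simp
  next
    case (Suc n)
    have "L0 \<le> l0 + Suc n" by (simp add: l0_def)
    then obtain a where a: "D (l0 + Suc n) = C a" using L0 by blast
    obtain b' where b': "C (k0 + Suc n) = D b'" using K0[of "k0 + Suc n"] \<open>K0 \<le> k0\<close> by auto
    have "D b' \<subseteq> D (l0 + n)" using b' Suc.IH lad_anti[OF C, of "k0+n" "k0 + Suc n"] by simp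
    moreover have "D b' \<noteq> D (l0 + n)"
    proof
      assume "D b' = D (l0 + n)"
      hence "C (k0 + Suc n) = C (k0 + n)" using b' Suc.IH by simp
      thus False using lad_iff[OF C, of "k0+n" "k0 + Suc n"] by simp
    qed
    ultimately have "l0 + Suc n \<le> b'" using lad_iff[OF D, of b' "l0+n"] by (cases "b' = l0 + n") auto
    hence "D b' \<subseteq> D (l0 + Suc n)" using lad_anti[OF D] by blast
    hence "C (k0 + Suc n) \<subseteq> C a" using a b' by simp
    hence "a \<le> k0 + Suc n" using lad_iff[OF C] by blast
    have "C a \<subseteq> C (k0 + n)" using a Suc.IH lad_anti[OF D, of "l0+n" "l0 + Suc n"] by simp
    moreover have "C a \<noteq> C (k0 + n)"
    proof
      assume "C a = C (k0 + n)"
      hence "D (l0 + Suc n) = D (l0 + n)" using a Suc.IH by simp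
      thus False using lad_iff[OF D, of "l0+n" "l0 + Suc n"] by simp
    qed
    ultimately have "k0 + n < a" using lad_iff[OF C, of a "k0+n"] by (cases "a = k0+n") auto
    hence "a = k0 + Suc n" using \<open>a \<le> k0 + Suc n\<close> by simp
    thus ?case using a by simp
  qed
  thus ?thesis by blast
qed

theorem mainTheorem4:
  fixes C D :: "nat \<Rightarrow> 'a::linorder set"
  assumes all_typed: "\<forall>I::'a set. proper_cut I \<longrightarrow> (\<exists>n. cut_type I n)"
    and "ladder C" and "ladder D"
  shows "(\<exists>k0 l0. \<forall>n. C (k0 + n) = D (l0 + n)) \<and>
         (\<forall>ns ms. has_spectrum C ns \<longrightarrow> has_spectrum D ms \<longrightarrow>
            (\<exists>k0 l0. \<forall>n. ns (k0 + n) = ms (l0 + n)))"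
proof -
  obtain ns where C: "lad C ns" using ladder_lad[OF assms(2)] by blast
  obtain ms where D: "lad D ms" using ladder_lad[OF assms(3)] by blast
  obtain k0 l0 where kl: "\<forall>n. C (k0 + n) = D (l0 + n)" using tails[OF C D] by blast
  have "\<exists>k0 l0. \<forall>n. ns' (k0 + n) = ms' (l0 + n)"
    if "has_spectrum C ns'" "has_spectrum D ms'" for ns' ms'
  proof -
    have "ns' (k0 + n) = ms' (l0 + n)" for n
    proof -
      have "cut_type (C (k0+n)) (ns' (k0+n))" using that(1) unfolding has_spectrum_def by blast
      moreover have "cut_type (C (k0+n)) (ms' (l0+n))" using that(2) kl unfolding has_spectrum_def by simp
      ultimately show ?thesis by (rule type_unique)
    qed
    thus ?thesis by blast
  qed
  thus ?thesis using kl by blast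
qed

end
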